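(* Let $Q$ be a conjunctive query over $\mathcal{D}^p$, $D^p$ an instance of $\mathcal{D}^p$ (consistent w.r.t. a set $\mathcal{IC}$ of denial constraints), and $\vec t$ an answer of $Q$ with minimum probability $p^{\min}$ and maximum probability $p^{\max}$. Let $m$ be the number of tuples in $D^p$ plus $3$, and $a$ the maximum among the numerators and denominators of the probabilities of the tuples of $D^p$. Then $p^{\min}$ and $p^{\max}$ are expressible as fractions $\eta/\delta$ with integers $0\le\eta\le(ma)^m$ and $0<\delta\le(ma)^m$.
   Context: A PDB instance $D^p$ of a schema $\mathcal{D}^p$ is a finite set of tuples, each with a rational probability $p(t)\in[0,1]$ given as a fraction. Possible worlds are subsets of its tuples; an interpretation is a probability distribution on possible worlds such that the total probability of worlds containing $t$ is $p(t)$. A model w.r.t. a set $\mathcal{IC}$ of denial constraints is an interpretation assigning probability $0$ to every world violating $\mathcal{IC}$. A conjunctive query is $Q(\vec x)=\exists\vec z.\,R_1(\vec y_1)\wedge\dots\wedge R_m(\vec y_m)\wedge\phi$, $\phi$ a conjunction of comparisons. For a model $M$ and ground tuple $\vec t$, $p^M_Q(\vec t)$ is the total $M$-probability of worlds $w$ with $w\models Q(\vec t)$. $\vec t$ is an answer of $Q$ with minimum probability $p^{\min}=\min_M p^M_Q(\vec t)$ and maximum probability $p^{\max}=\max_M p^M_Q(\vec t)$ over all models $M$ (where $\vec t$ is required to satisfy $w\models Q(\vec t)$ for some possible world $w$). *)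

theory Defs
  imports Complex_Main
begin

type_synonym ('r, 'c) fact = "'r \<times> 'c list"

datatype ('v, 'c) qterm = Var 'v | Const 'c

datatype cmp_op = CEq | CNeq | CLt | CLe

text \<open>A comparison between two terms (greater-than variants by swapping arguments).\<close>
type_synonym ('v, 'c) comparison = "cmp_op \<times> ('v, 'c) qterm \<times> ('v, 'c) qterm"

type_synonym ('r, 'v, 'c) qatom = "'r \<times> ('v, 'c) qterm list"

record ('r, 'v, 'c) cq =
  head :: "'v list"
  atoms :: "('r, 'v, 'c) qatom list"
  comps :: "('v, 'c) comparison list"

text \<open>Denial constraint: \<not>\<exists>z. R1(y1) \<and> ... \<and> Rk(yk) \<and> \<phi>\<close>
record ('r, 'v, 'c) denial =
  dc_atoms :: "('r, 'v, 'c) qatom list"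
  dc_comps :: "('v, 'c) comparison list"

fun eval_term :: "('v \<Rightarrow> 'c) \<Rightarrow> ('v, 'c) qterm \<Rightarrow> 'c" where
  "eval_term \<nu> (Var x) = \<nu> x"
| "eval_term \<nu> (Const c) = c"

fun eval_cmp :: "('v \<Rightarrow> 'c::linorder) \<Rightarrow> ('v, 'c) comparison \<Rightarrow> bool" where
  "eval_cmp \<nu> (CEq, s, t) = (eval_term \<nu> s = eval_term \<nu> t)"
| "eval_cmp \<nu> (CNeq, s, t) = (eval_term \<nu> s \<noteq> eval_term \<nu> t)"
| "eval_cmp \<nu> (CLt, s, t) = (eval_term \<nu> s < eval_term \<nu> t)"
| "eval_cmp \<nu> (CLe, s, t) = (eval_term \<nu> s \<le> eval_term \<nu> t)"

definition ground_atom :: "('v \<Rightarrow> 'c) \<Rightarrow> ('r, 'v, 'c) qatom \<Rightarrow> ('r, 'c) fact" where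
  "ground_atom \<nu> A = (fst A, map (eval_term \<nu>) (snd A))"

definition body_holds ::
  "('r, 'c::linorder) fact set \<Rightarrow> ('v \<Rightarrow> 'c) \<Rightarrow> ('r, 'v, 'c) qatom list \<Rightarrow> ('v, 'c) comparison list \<Rightarrow> bool" where
  "body_holds w \<nu> as cs \<longleftrightarrow> (\<forall>A\<in>set as. ground_atom \<nu> A \<in> w) \<and> (\<forall>c\<in>set cs. eval_cmp \<nu> c)"

definition sat_query :: "('r, 'c::linorder) fact set \<Rightarrow> ('r, 'v, 'c) cq \<Rightarrow> 'c list \<Rightarrow> bool" where
  "sat_query w Q t \<longleftrightarrow> (\<exists>\<nu>. map \<nu> (head Q) = t \<and> body_holds w \<nu> (atoms Q) (comps Q))"

definition violates :: "('r, 'c::linorder) fact set \<Rightarrow> ('r, 'v, 'c) denial set \<Rightarrow> bool" where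
  "violates w IC \<longleftrightarrow> (\<exists>d\<in>IC. \<exists>\<nu>. body_holds w \<nu> (dc_atoms d) (dc_comps d))"

definition pdb :: "('r, 'c) fact set \<Rightarrow> (('r, 'c) fact \<Rightarrow> rat) \<Rightarrow> bool" where
  "pdb D p \<longleftrightarrow> finite D \<and> (\<forall>t\<in>D. 0 \<le> p t \<and> p t \<le> 1)"

definition pdb_interp ::
  "('r, 'c) fact set \<Rightarrow> (('r, 'c) fact \<Rightarrow> rat) \<Rightarrow> (('r, 'c) fact set \<Rightarrow> real) \<Rightarrow> bool" where
  "pdb_interp D p M \<longleftrightarrow>
     (\<forall>w\<in>Pow D. 0 \<le> M w) \<and> (\<Sum>w\<in>Pow D. M w) = 1 \<and>
     (\<forall>t\<in>D. (\<Sum>w\<in>{w\<in>Pow D. t \<in> w}. M w) = real_of_rat (p t))"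

definition is_model ::
  "('r, 'c::linorder) fact set \<Rightarrow> (('r, 'c) fact \<Rightarrow> rat) \<Rightarrow> ('r, 'v, 'c) denial set
     \<Rightarrow> (('r, 'c) fact set \<Rightarrow> real) \<Rightarrow> bool" where
  "is_model D p IC M \<longleftrightarrow> pdb_interp D p M \<and> (\<forall>w\<in>Pow D. violates w IC \<longrightarrow> M w = 0)"

definition consistent ::
  "('r, 'c::linorder) fact set \<Rightarrow> (('r, 'c) fact \<Rightarrow> rat) \<Rightarrow> ('r, 'v, 'c) denial set \<Rightarrow> bool" where
  "consistent D p IC \<longleftrightarrow> (\<exists>M. is_model D p IC M)"

definition query_prob ::
  "('r, 'c::linorder) fact set \<Rightarrow> (('r, 'c) fact set \<Rightarrow> real) \<Rightarrow> ('r, 'v, 'c) cq \<Rightarrow> 'c list \<Rightarrow> real" where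
  "query_prob D M Q t = (\<Sum>w\<in>{w\<in>Pow D. sat_query w Q t}. M w)"

text \<open>The set of values \<open>p^M_Q(t)\<close> over all models \<open>M\<close>; \<open>p^min\<close>/\<open>p^max\<close> are its least/greatest elements.\<close>
definition model_probs ::
  "('r, 'c::linorder) fact set \<Rightarrow> (('r, 'c) fact \<Rightarrow> rat) \<Rightarrow> ('r, 'v, 'c) denial set
     \<Rightarrow> ('r, 'v, 'c) cq \<Rightarrow> 'c list \<Rightarrow> real set" where
  "model_probs D p IC Q t = {query_prob D M Q t | M. is_model D p IC M}"

definition is_answer :: "('r, 'c::linorder) fact set \<Rightarrow> ('r, 'v, 'c) cq \<Rightarrow> 'c list \<Rightarrow> bool" where
  "is_answer D Q t \<longleftrightarrow> (\<exists>w\<in>Pow D. sat_query w Q t)"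

text \<open>\<open>a\<close>: maximum among numerators and denominators of the tuple probabilities
  (in lowest terms; 1 is included so that the maximum is defined for an empty instance).\<close>
definition max_num_den :: "('r, 'c) fact set \<Rightarrow> (('r, 'c) fact \<Rightarrow> rat) \<Rightarrow> int" where
  "max_num_den D p = Max (insert 1 ((\<lambda>t. fst (quotient_of (p t))) ` D \<union> (\<lambda>t. snd (quotient_of (p t))) ` D))"

end

theory Submission
  imports Defs "Jordan_Normal_Form.Determinant"
begin


lemma mult_mat_vec_sum:
  assumes "A \<in> carrier_mat r k" "v \<in> carrier_vec k" "i < r"
  shows "(A *\<^sub>v v) $ i = (\<Sum>j<k. A $$ (i,j) * v $ j)"
  using assms by (auto simp: scalar_prod_def lessThan_atLeast0 intro!: sum.cong)

lemma wide_kernel: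
  fixes A :: "real mat"
  assumes A: "A \<in> carrier_mat r k" and rk: "r < k"
  shows "\<exists>v\<in>carrier_vec k. v \<noteq> 0\<^sub>v k \<and> A *\<^sub>v v = 0\<^sub>v r"
proof -
  define c where "c = (\<lambda>i. if i < r then row A i else 0\<^sub>v k)"
  define P where "P = mat\<^sub>r k k (\<lambda>i. if i = r then 0\<^sub>v k else c i)"
  have c: "c \<in> {0..<k} \<rightarrow> carrier_vec k" using A by (auto simp: c_def)
  have "det P = 0" unfolding P_def by (rule det_row_0[OF rk c])
  moreover have P: "P \<in> carrier_mat k k" unfolding P_def by auto
  ultimately obtain v where v: "v \<in> carrier_vec k" "v \<noteq> 0\<^sub>v k" "P *\<^sub>v v = 0\<^sub>v k"
    using det_0_iff_vec_prod_zero_field[OF P] by auto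
  have "A *\<^sub>v v = 0\<^sub>v r"
  proof (rule eq_vecI)
    fix i assume i: "i < dim_vec (0\<^sub>v r :: real vec)"
    hence i: "i < r" by simp
    have "(P *\<^sub>v v) $ i = 0" using v(3) i rk by simp
    moreover have "(P *\<^sub>v v) $ i = row P i \<bullet> v" using i rk P by simp
    moreover have "row P i = row A i" using i rk A unfolding P_def c_def
      by (subst row_mat_of_row_fun) auto
    ultimately show "(A *\<^sub>v v) $ i = 0\<^sub>v r $ i" using i A by simp
  qed (use A in simp)
  thus ?thesis using v by auto
qed

lemma det_Ints:
  fixes A :: "real mat"
  assumes A: "A \<in> carrier_mat k k"
    and ent: "\<And>i j. i < k \<Longrightarrow> j < k \<Longrightarrow> A $$ (i,j) \<in> \<int>"
  shows "det A \<in> \<int>"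
proof -
  have pin: "p i < k" if "p permutes {0..<k}" "i < k" for p i
    using that permutes_in_image by fastforce
  show ?thesis unfolding det_def'[OF A]
    by (intro Ints_sum Ints_mult Ints_prod) (auto simp: ent pin)
qed

lemma det_int_bound:
  fixes A :: "real mat"
  assumes A: "A \<in> carrier_mat k k"
    and ent: "\<And>i j. i < k \<Longrightarrow> j < k \<Longrightarrow> A $$ (i,j) \<in> \<int> \<and> \<bar>A $$ (i,j)\<bar> \<le> a"
  shows "det A \<in> \<int> \<and> \<bar>det A\<bar> \<le> fact k * a ^ k"
proof -
  let ?P = "{p. p permutes {0..<k}}"
  have d: "det A = (\<Sum>p\<in>?P. signof p * (\<Prod>i = 0..<k. A $$ (i, p i)))"
    by (rule det_def'[OF A])
  have pin: "p i < k" if "p permutes {0..<k}" "i < k" for p i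
    using that permutes_in_image by fastforce
  have ints: "det A \<in> \<int>" unfolding d
    by (intro Ints_sum Ints_mult Ints_prod) (auto simp: ent pin)
  have "\<bar>det A\<bar> \<le> (\<Sum>p\<in>?P. \<bar>signof p * (\<Prod>i = 0..<k. A $$ (i, p i))\<bar>)"
    unfolding d by (rule sum_abs)
  also have "\<dots> \<le> (\<Sum>p\<in>?P. a ^ k)"
  proof (rule sum_mono)
    fix p assume p: "p \<in> ?P"
    have "\<bar>signof p * (\<Prod>i = 0..<k. A $$ (i, p i))\<bar> = (\<Prod>i = 0..<k. \<bar>A $$ (i, p i)\<bar>)"
      by (cases "sign p = (1::int)") (auto simp: abs_mult abs_prod sign_def)
    also have "\<dots> \<le> (\<Prod>i = 0..<k. a)"
      by (rule prod_mono) (use p in \<open>auto simp: ent pin\<close>)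
    finally show "\<bar>signof p * (\<Prod>i = 0..<k. A $$ (i, p i))\<bar> \<le> a ^ k" by simp
  qed
  also have "\<dots> = fact k * a ^ k"
    by (simp add: card_permutations)
  finally show ?thesis using ints by simp
qed

lemma key_square:
  fixes A :: "real mat"
  assumes A: "A \<in> carrier_mat k k" and x: "x \<in> carrier_vec k"
    and ker: "\<forall>v\<in>carrier_vec k. A *\<^sub>v v = 0\<^sub>v k \<longrightarrow> v = 0\<^sub>v k"
    and ent: "\<And>i j. i < k \<Longrightarrow> j < k \<Longrightarrow> A $$ (i,j) \<in> \<int> \<and> \<bar>A $$ (i,j)\<bar> \<le> a"
    and bint: "\<And>i. i < k \<Longrightarrow> (A *\<^sub>v x) $ i \<in> \<int>"
  shows "\<exists>d. d \<in> \<int> \<and> d \<noteq> 0 \<and> \<bar>d\<bar> \<le> fact k * a ^ k \<and> (\<forall>j<k. d * x $ j \<in> \<int>)"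
proof (intro exI conjI allI impI)
  show "det A \<in> \<int>" "\<bar>det A\<bar> \<le> fact k * a ^ k" using det_int_bound[OF A ent] by auto
  show "det A \<noteq> 0" using det_0_iff_vec_prod_zero_field[OF A] ker by auto
  fix j assume j: "j < k"
  have "det A * x $ j = det (replace_col A (A *\<^sub>v x) j)"
    using cramer_lemma_mat[OF A x j] by simp
  also have "\<dots> \<in> \<int>"
  proof -
    have RA: "replace_col A (A *\<^sub>v x) j \<in> carrier_mat k k" using A by (simp add: replace_col_def)
    show ?thesis
      by (rule det_Ints[OF RA]) (use A ent bint in \<open>auto simp: replace_col_def\<close>)
  qed
  finally show "det A * x $ j \<in> \<int>" .
qed

lemma key:
  fixes A :: "real mat"
  assumes "A \<in> carrier_mat r k" "x \<in> carrier_vec k"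
    "\<forall>v\<in>carrier_vec k. A *\<^sub>v v = 0\<^sub>v r \<longrightarrow> v = 0\<^sub>v k"
    "\<And>i j. i < r \<Longrightarrow> j < k \<Longrightarrow> A $$ (i,j) \<in> \<int> \<and> \<bar>A $$ (i,j)\<bar> \<le> a"
    "\<And>i. i < r \<Longrightarrow> (A *\<^sub>v x) $ i \<in> \<int>"
  shows "k \<le> r \<and> (\<exists>d. d \<in> \<int> \<and> d \<noteq> 0 \<and> \<bar>d\<bar> \<le> fact k * a ^ k \<and> (\<forall>j<k. d * x $ j \<in> \<int>))"
  using assms
proof (induction r arbitrary: A)
  case (0 A)
  show ?case
  proof (cases "k = 0")
    case True
    have "\<exists>d. d \<in> \<int> \<and> d \<noteq> 0 \<and> \<bar>d\<bar> \<le> fact k * a ^ k \<and> (\<forall>j<k. d * x $ j \<in> \<int>)"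
      by (rule exI[of _ 1]) (simp add: True)
    then show ?thesis using True by simp
  next
    case False
    then obtain v where "v\<in>carrier_vec k" "v \<noteq> 0\<^sub>v k" "A *\<^sub>v v = 0\<^sub>v 0"
      using wide_kernel[OF 0(1)] by auto
    then show ?thesis using 0(3) by blast
  qed
next
  case (Suc r' A)
  note A = Suc.prems(1) and x = Suc.prems(2) and ker = Suc.prems(3)
  consider "Suc r' < k" | "Suc r' = k" | "k < Suc r'" by linarith
  then show ?case
  proof cases
    case 1
    then obtain v where "v\<in>carrier_vec k" "v \<noteq> 0\<^sub>v k" "A *\<^sub>v v = 0\<^sub>v (Suc r')"
      using wide_kernel[OF A] by auto
    then show ?thesis using ker by blast
  next
    case 2
    have Ak: "A \<in> carrier_mat k k" using A 2 by simp
    have kerk: "\<forall>v\<in>carrier_vec k. A *\<^sub>v v = 0\<^sub>v k \<longrightarrow> v = 0\<^sub>v k" using ker 2 by simp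
    show ?thesis using key_square[OF Ak x kerk Suc.prems(4)[unfolded 2] Suc.prems(5)[unfolded 2]] 2
      by auto
  next
    case 3
    have T: "transpose_mat A \<in> carrier_mat k (Suc r')" using A by simp
    obtain c where c: "c \<in> carrier_vec (Suc r')" "c \<noteq> 0\<^sub>v (Suc r')"
        "transpose_mat A *\<^sub>v c = 0\<^sub>v k"
      using wide_kernel[OF T 3] by auto
    obtain i0 where i0: "i0 < Suc r'" "c $ i0 \<noteq> 0"
    proof -
      have "\<exists>i0 < Suc r'. c $ i0 \<noteq> 0"
      proof (rule ccontr)
        assume "\<not> ?thesis"
        hence "c = 0\<^sub>v (Suc r')" using c(1) by (intro eq_vecI) auto
        thus False using c(2) by simp
      qed
      thus ?thesis using that by blast
    qed
    define f where "f = (\<lambda>i. if i < i0 then i else Suc i)"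
    have f: "i < r' \<Longrightarrow> f i < Suc r'" for i by (auto simp: f_def)
    define A' where "A' = mat r' k (\<lambda>(i,j). A $$ (f i, j))"
    have A': "A' \<in> carrier_mat r' k" by (simp add: A'_def)
    have A'v: "(A' *\<^sub>v v) $ i = (A *\<^sub>v v) $ (f i)" if "v \<in> carrier_vec k" "i < r'" for v i
      using that f[OF that(2)] A A'
      by (subst mult_mat_vec_sum[OF A' that], subst mult_mat_vec_sum[OF A that(1) f[OF that(2)]])
        (simp add: A'_def)
    have ker': "\<forall>v\<in>carrier_vec k. A' *\<^sub>v v = 0\<^sub>v r' \<longrightarrow> v = 0\<^sub>v k"
    proof (intro ballI impI)
      fix v :: "real vec" assume v: "v \<in> carrier_vec k" and Av: "A' *\<^sub>v v = 0\<^sub>v r'"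
      have other: "(A *\<^sub>v v) $ i = 0" if "i < Suc r'" "i \<noteq> i0" for i
      proof -
        define g where "g = (if i < i0 then i else i - 1)"
        have "g < r'" "f g = i" using that i0 by (auto simp: g_def f_def)
        thus ?thesis using A'v[OF v \<open>g < r'\<close>] Av by simp
      qed
      have "(\<Sum>i<Suc r'. c $ i * (A *\<^sub>v v) $ i) = (\<Sum>i<Suc r'. c $ i * (\<Sum>j<k. A $$ (i,j) * v $ j))"
        using A v by (intro sum.cong) (auto simp: mult_mat_vec_sum simp del: index_mult_mat_vec)
      also have "\<dots> = (\<Sum>j<k. (\<Sum>i<Suc r'. A $$ (i,j) * c $ i) * v $ j)"
      proof -
        have "(\<Sum>i<Suc r'. c $ i * (\<Sum>j<k. A $$ (i,j) * v $ j)) = (\<Sum>i<Suc r'. \<Sum>j<k. A $$ (i,j) * c $ i * v $ j)"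
          by (simp add: sum_distrib_left mult_ac)
        also have "\<dots> = (\<Sum>j<k. \<Sum>i<Suc r'. A $$ (i,j) * c $ i * v $ j)"
          by (rule sum.swap)
        also have "\<dots> = (\<Sum>j<k. (\<Sum>i<Suc r'. A $$ (i,j) * c $ i) * v $ j)"
          by (simp only: sum_distrib_right)
        finally show ?thesis .
      qed
      also have "\<dots> = (\<Sum>j<k. (transpose_mat A *\<^sub>v c) $ j * v $ j)"
        using A c(1) T by (intro sum.cong) (auto simp: mult_mat_vec_sum simp del: index_mult_mat_vec)
      also have "\<dots> = 0" using c(3) by simp
      finally have s0: "(\<Sum>i<Suc r'. c $ i * (A *\<^sub>v v) $ i) = 0" .
      have "(\<Sum>i<Suc r'. c $ i * (A *\<^sub>v v) $ i) = c $ i0 * (A *\<^sub>v v) $ i0"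
        by (subst sum.mono_neutral_right[of "{..<Suc r'}" "{i0}"]) (use i0 other in auto)
      with s0 i0 have "(A *\<^sub>v v) $ i0 = 0" by simp
      with other have "A *\<^sub>v v = 0\<^sub>v (Suc r')" using A
      proof (intro eq_vecI)
        fix i assume "i < dim_vec (0\<^sub>v (Suc r') :: real vec)"
        hence "i < Suc r'" by simp
        thus "(A *\<^sub>v v) $ i = 0\<^sub>v (Suc r') $ i"
          using other \<open>(A *\<^sub>v v) $ i0 = 0\<close> by (cases "i = i0") auto
      qed (use A in simp)
      thus "v = 0\<^sub>v k" using ker v by blast
    qed
    have IH: "k \<le> r' \<and> (\<exists>d. d \<in> \<int> \<and> d \<noteq> 0 \<and> \<bar>d\<bar> \<le> fact k * a ^ k \<and> (\<forall>j<k. d * x $ j \<in> \<int>))"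
    proof (rule Suc.IH[OF A' x ker'])
      show "A' $$ (i, j) \<in> \<int> \<and> \<bar>A' $$ (i, j)\<bar> \<le> a" if "i < r'" "j < k" for i j
        using Suc.prems(4)[OF f[OF that(1)] that(2)] that by (simp add: A'_def)
      show "(A' *\<^sub>v x) $ i \<in> \<int>" if "i < r'" for i
        using Suc.prems(5)[OF f[OF that]] A'v[OF x that] by simp
    qed
    thus ?thesis by auto
  qed
qed



definition supp :: "('r, 'c) fact set \<Rightarrow> (('r, 'c) fact set \<Rightarrow> real) \<Rightarrow> ('r, 'c) fact set set" where
  "supp D M = {w\<in>Pow D. M w \<noteq> 0}"

definition indep :: "('r, 'c) fact set \<Rightarrow> ('r, 'c) fact set set \<Rightarrow> bool" where
  "indep D S \<longleftrightarrow> (\<forall>f. (\<Sum>w\<in>S. f w) = 0 \<and> (\<forall>t\<in>D. (\<Sum>w\<in>{w\<in>S. t \<in> w}. f w) = (0::real))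
      \<longrightarrow> (\<forall>w\<in>S. f w = 0))"

lemma sum_supp:
  assumes "finite A" "S \<subseteq> A" "\<And>w. w \<in> A \<Longrightarrow> w \<notin> S \<Longrightarrow> g w = 0"
  shows "(\<Sum>w\<in>{w\<in>A. P w}. g w) = (\<Sum>w\<in>{w\<in>S. P w}. (g w :: real))"
  by (rule sum.mono_neutral_right) (use assms in auto)

lemma reduce:
  assumes fin: "finite D" and M: "is_model D p IC M" and sig: "\<sigma> = 1 \<or> \<sigma> = (-1::real)"
  shows "\<exists>M'. is_model D p IC M' \<and> indep D (supp D M') \<and>
           \<sigma> * query_prob D M' Q t \<le> \<sigma> * query_prob D M Q t"
  using M
proof (induction "card (supp D M)" arbitrary: M rule: less_induct)
  case less
  note M = less.prems
  define S where "S = supp D M"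
  have SP: "S \<subseteq> Pow D" by (auto simp: S_def supp_def)
  have finP: "finite (Pow D)" using fin by simp
  have finS: "finite S" using SP finP finite_subset by blast
  have Mnn: "\<And>w. w \<in> Pow D \<Longrightarrow> 0 \<le> M w" using M by (auto simp: is_model_def pdb_interp_def)
  have Mout: "\<And>w. w \<in> Pow D \<Longrightarrow> w \<notin> S \<Longrightarrow> M w = 0" by (auto simp: S_def supp_def)
  show ?case
  proof (cases "indep D S")
    case True
    then show ?thesis using M S_def by blast
  next
    case False
    then obtain f w1 where f0: "(\<Sum>w\<in>S. f w) = 0"
      and fm: "\<forall>t\<in>D. (\<Sum>w\<in>{w\<in>S. t \<in> w}. f w) = (0::real)" and w1: "w1 \<in> S" "f w1 \<noteq> 0"
      unfolding indep_def by blast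
    define g0 where "g0 = (\<lambda>w. if w \<in> S then f w else 0)"
    define cobj where "cobj = (\<lambda>h. \<Sum>w\<in>{w\<in>Pow D. sat_query w Q t}. (h w :: real))"
    define g where "g = (if \<sigma> * cobj g0 \<le> 0 then g0 else (\<lambda>w. - g0 w))"
    have gout: "\<And>w. w \<notin> S \<Longrightarrow> g w = 0" by (auto simp: g_def g0_def)
    have g0S: "(\<Sum>w\<in>S. g0 w) = 0" using f0 by (simp add: g0_def)
    have gS: "(\<Sum>w\<in>S. g w) = 0" using g0S by (auto simp: g_def sum_negf)
    have gm: "\<And>t. t \<in> D \<Longrightarrow> (\<Sum>w\<in>{w\<in>S. t \<in> w}. g w) = 0"
    proof -
      fix t assume "t \<in> D"
      hence "(\<Sum>w\<in>{w\<in>S. t \<in> w}. g0 w) = 0" using fm by (simp add: g0_def)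
      thus "(\<Sum>w\<in>{w\<in>S. t \<in> w}. g w) = 0" by (auto simp: g_def sum_negf)
    qed
    have gw1: "g w1 \<noteq> 0" using w1 by (auto simp: g_def g0_def)
    have gobj: "\<sigma> * cobj g \<le> 0"
      by (auto simp: g_def cobj_def sum_negf)
    define T where "T = {w\<in>S. g w < 0}"
    have finT: "finite T" using finS by (simp add: T_def)
    have Tne: "T \<noteq> {}"
    proof
      assume "T = {}"
      hence "\<forall>w\<in>S. 0 \<le> g w" by (auto simp: T_def)
      hence "\<forall>w\<in>S. g w = 0" using gS sum_nonneg_eq_0_iff[OF finS] by blast
      thus False using w1 gw1 by blast
    qed
    define ratio where "ratio = (\<lambda>w. M w / (- g w))"
    define lam where "lam = Min (ratio ` T)"
    obtain w0 where w0: "w0 \<in> T" "lam = ratio w0"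
    proof -
      have "lam \<in> ratio ` T" unfolding lam_def using finT Tne by (intro Min_in) auto
      thus ?thesis using that by blast
    qed
    have lmin: "\<And>w. w \<in> T \<Longrightarrow> lam \<le> ratio w" using finT by (auto simp: lam_def)
    have lnn: "0 \<le> lam" using w0 Mnn SP by (auto simp: ratio_def T_def divide_nonneg_neg)
    define M' where "M' = (\<lambda>w. M w + lam * g w)"
    have sumPow: "(\<Sum>w\<in>{w\<in>Pow D. P w}. g w) = (\<Sum>w\<in>{w\<in>S. P w}. g w)" for P
      by (rule sum_supp[OF finP SP]) (simp add: gout)
    have M'nn: "0 \<le> M' w" if "w \<in> Pow D" for w
    proof (cases "w \<in> T")
      case True
      hence gw: "g w < 0" by (auto simp: T_def)
      have "lam * g w \<ge> ratio w * g w"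
        using lmin[OF True] gw by (simp add: mult_right_mono_neg)
      moreover have "ratio w * g w = - M w" using gw by (simp add: ratio_def)
      ultimately show ?thesis by (simp add: M'_def)
    next
      case False
      hence "g w \<ge> 0" using gout by (cases "w \<in> S") (auto simp: T_def)
      thus ?thesis using Mnn[OF that] lnn by (simp add: M'_def)
    qed
    have M'model: "is_model D p IC M'"
      unfolding is_model_def pdb_interp_def
    proof (intro conjI ballI impI)
      fix w assume "w \<in> Pow D" thus "0 \<le> M' w" by (rule M'nn)
    next
      have "(\<Sum>w\<in>Pow D. g w) = 0" using sumPow[of "\<lambda>_. True"] gS by (simp add: Pow_def)
      thus "(\<Sum>w\<in>Pow D. M' w) = 1" using M
        by (simp add: M'_def sum.distrib sum_distrib_left[symmetric] is_model_def pdb_interp_def)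
    next
      fix t assume t: "t \<in> D"
      have "(\<Sum>w\<in>{w\<in>Pow D. t \<in> w}. g w) = 0" using sumPow[of "\<lambda>w. t \<in> w"] gm[OF t] by simp
      thus "(\<Sum>w\<in>{w\<in>Pow D. t \<in> w}. M' w) = real_of_rat (p t)" using M t
        by (simp add: M'_def sum.distrib sum_distrib_left[symmetric] is_model_def pdb_interp_def)
    next
      fix w assume w: "w \<in> Pow D" "violates w IC"
      hence "M w = 0" using M by (auto simp: is_model_def)
      hence "w \<notin> S" by (auto simp: S_def supp_def)
      thus "M' w = 0" using \<open>M w = 0\<close> gout by (simp add: M'_def)
    qed
    have suppsub: "supp D M' \<subset> S"
    proof -
      have "supp D M' \<subseteq> S"
      proof
        fix w assume w: "w \<in> supp D M'"
        show "w \<in> S"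
        proof (rule ccontr)
          assume "w \<notin> S"
          moreover have "w \<in> Pow D" using w by (simp add: supp_def)
          ultimately have "M' w = 0" using Mout gout by (simp add: M'_def)
          thus False using w by (simp add: supp_def)
        qed
      qed
      moreover have "w0 \<in> S" using w0 by (auto simp: T_def)
      moreover have "M' w0 = 0" using w0 by (auto simp: M'_def ratio_def T_def)
      ultimately show ?thesis by (auto simp: supp_def)
    qed
    hence lt: "card (supp D M') < card (supp D M)"
      using finS psubset_card_mono S_def by blast
    have "query_prob D M' Q t = query_prob D M Q t + lam * cobj g"
      by (simp add: query_prob_def M'_def cobj_def sum.distrib sum_distrib_left)
    hence obj: "\<sigma> * query_prob D M' Q t \<le> \<sigma> * query_prob D M Q t"
    proof -
      have "\<sigma> * (lam * cobj g) = lam * (\<sigma> * cobj g)" by simp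
      also have "\<dots> \<le> 0" using gobj lnn by (simp add: mult_nonneg_nonpos)
      finally show ?thesis using \<open>query_prob D M' Q t = _\<close> by (simp add: algebra_simps)
    qed
    obtain M'' where "is_model D p IC M''" "indep D (supp D M'')"
        "\<sigma> * query_prob D M'' Q t \<le> \<sigma> * query_prob D M' Q t"
      using less.hyps[OF lt M'model] by blast
    thus ?thesis using obj by (meson order_trans)
  qed
qed

lemma sum_nth_distinct:
  assumes "distinct ss"
  shows "(\<Sum>j<length ss. h (ss ! j)) = (\<Sum>w\<in>set ss. (h w :: real))"
proof -
  have "set ss = (!) ss ` {..<length ss}" by (auto simp: in_set_conv_nth)
  moreover have "inj_on ((!) ss) {..<length ss}" using assms by (simp add: inj_on_nth)
  ultimately show ?thesis by (simp add: sum.reindex)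
qed

lemma sum_nth_distinct_filter:
  assumes "distinct ss"
  shows "(\<Sum>j<length ss. if P (ss ! j) then h (ss ! j) else 0) = (\<Sum>w\<in>{w\<in>set ss. P w}. (h w :: real))"
  using sum_nth_distinct[OF assms, of "\<lambda>w. if P w then h w else 0"]
  by (simp add: sum.inter_filter)

lemma bound:
  fixes D :: "('r, 'c::linorder) fact set"
  assumes pdb: "pdb D p" and M: "is_model D p IC M" and ind: "indep D (supp D M)"
  shows "\<exists>\<eta> \<delta> :: int. 0 \<le> \<eta> \<and> \<eta> \<le> (int (card D + 3) * max_num_den D p) ^ (card D + 3) \<and>
     0 < \<delta> \<and> \<delta> \<le> (int (card D + 3) * max_num_den D p) ^ (card D + 3) \<and>
     query_prob D M Q t = real_of_int \<eta> / real_of_int \<delta>"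
proof -
  define S where "S = supp D M"
  define a where "a = max_num_den D p"
  define m where "m = card D + 3"
  have fin: "finite D" using pdb by (simp add: pdb_def)
  have SP: "S \<subseteq> Pow D" by (auto simp: S_def supp_def)
  have finP: "finite (Pow D)" using fin by simp
  have finS: "finite S" using SP finP finite_subset by blast
  obtain ds where ds: "set ds = D" "distinct ds" using finite_distinct_list[OF fin] by blast
  obtain ss where ss: "set ss = S" "distinct ss" using finite_distinct_list[OF finS] by blast
  define n where "n = length ds"
  define k where "k = length ss"
  have nD: "card D = n" using ds by (simp add: n_def distinct_card[symmetric])
  define num where "num = (\<lambda>t. fst (quotient_of (p t)))"
  define den where "den = (\<lambda>t. snd (quotient_of (p t)))"
  have denpos: "\<And>t. den t > 0" by (simp add: den_def quotient_of_denom_pos')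
  have pval: "real_of_rat (p t) = real_of_int (num t) / real_of_int (den t)" for t
  proof -
    have "p t = of_int (num t) / of_int (den t)"
      by (rule quotient_of_div) (simp add: num_def den_def)
    thus ?thesis by (simp add: of_rat_divide)
  qed
  have finA: "finite (insert 1 ((\<lambda>t. fst (quotient_of (p t))) ` D \<union> (\<lambda>t. snd (quotient_of (p t))) ` D))"
    using fin by simp
  have a1: "1 \<le> a" unfolding a_def max_num_den_def by (rule Max_ge[OF finA]) simp
  have dena: "\<And>t. t \<in> D \<Longrightarrow> den t \<le> a"
    unfolding a_def max_num_den_def den_def by (rule Max_ge[OF finA]) simp
  have Mnn: "\<And>w. w \<in> Pow D \<Longrightarrow> 0 \<le> M w" using M by (auto simp: is_model_def pdb_interp_def)
  have Mout: "\<And>w. w \<in> Pow D \<Longrightarrow> w \<notin> S \<Longrightarrow> M w = 0" by (auto simp: S_def supp_def)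
  have sumPow: "(\<Sum>w\<in>{w\<in>Pow D. P w}. M w) = (\<Sum>w\<in>{w\<in>S. P w}. M w)" for P
    by (rule sum_supp[OF finP SP]) (simp add: Mout)
  have Msum: "(\<Sum>w\<in>S. M w) = 1"
    using sumPow[of "\<lambda>_. True"] M by (simp add: Pow_def is_model_def pdb_interp_def)
  have Mmarg: "(\<Sum>w\<in>{w\<in>S. t \<in> w}. M w) = real_of_rat (p t)" if "t \<in> D" for t
    using sumPow[of "\<lambda>w. t \<in> w"] M that by (simp add: is_model_def pdb_interp_def)
  define A :: "real mat" where "A = mat (Suc n) k (\<lambda>(i,j). if i = 0 then 1
      else real_of_int (den (ds ! (i - 1))) * (if ds ! (i - 1) \<in> ss ! j then 1 else 0))"
  define x where "x = vec k (\<lambda>j. M (ss ! j))"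
  have A: "A \<in> carrier_mat (Suc n) k" by (simp add: A_def)
  have x: "x \<in> carrier_vec k" by (simp add: x_def)
  have Av0: "(A *\<^sub>v v) $ 0 = (\<Sum>j<k. v $ j)" if "v \<in> carrier_vec k" for v
  proof -
    have "(A *\<^sub>v v) $ 0 = (\<Sum>j<k. A $$ (0,j) * v $ j)" by (rule mult_mat_vec_sum[OF A that]) simp
    also have "\<dots> = (\<Sum>j<k. v $ j)" by (intro sum.cong refl) (simp add: A_def)
    finally show ?thesis .
  qed
  have AvS: "(A *\<^sub>v v) $ Suc i = real_of_int (den (ds ! i)) * (\<Sum>j<k. if ds ! i \<in> ss ! j then v $ j else 0)"
    if "v \<in> carrier_vec k" "i < n" for v i
  proof -
    have "(A *\<^sub>v v) $ Suc i = (\<Sum>j<k. A $$ (Suc i,j) * v $ j)"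
      by (rule mult_mat_vec_sum[OF A that(1)]) (use that(2) in simp)
    also have "\<dots> = (\<Sum>j<k. real_of_int (den (ds ! i)) * (if ds ! i \<in> ss ! j then v $ j else 0))"
      by (intro sum.cong refl) (use that(2) in \<open>simp add: A_def\<close>)
    also have "\<dots> = real_of_int (den (ds ! i)) * (\<Sum>j<k. if ds ! i \<in> ss ! j then v $ j else 0)"
      by (rule sum_distrib_left[symmetric])
    finally show ?thesis .
  qed
  have dsD: "ds ! i \<in> D" if "i < n" for i using that ds by (auto simp: n_def)
  have ker: "\<forall>v\<in>carrier_vec k. A *\<^sub>v v = 0\<^sub>v (Suc n) \<longrightarrow> v = 0\<^sub>v k"
  proof (intro ballI impI)
    fix v :: "real vec" assume v: "v \<in> carrier_vec k" and Av: "A *\<^sub>v v = 0\<^sub>v (Suc n)"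
    define F where "F = (\<lambda>w. v $ (inv_into {..<k} ((!) ss) w))"
    have injn: "inj_on ((!) ss) {..<k}" using ss by (simp add: inj_on_nth k_def)
    have Fv: "F (ss ! j) = v $ j" if "j < k" for j
      using inv_into_f_f[OF injn] that by (simp add: F_def)
    have e0: "(\<Sum>w\<in>S. F w) = 0"
    proof -
      have "(\<Sum>w\<in>S. F w) = (\<Sum>j<k. F (ss ! j))" using sum_nth_distinct[OF ss(2), of F] ss by (simp add: k_def)
      also have "\<dots> = (\<Sum>j<k. v $ j)" by (intro sum.cong) (auto simp: Fv)
      also have "\<dots> = 0" using Av0[OF v] Av by simp
      finally show ?thesis .
    qed
    have em: "(\<Sum>w\<in>{w\<in>S. t \<in> w}. F w) = 0" if t: "t \<in> D" for t
    proof -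
      obtain i where i: "i < n" "ds ! i = t" using t ds by (auto simp: in_set_conv_nth n_def)
      have "(\<Sum>w\<in>{w\<in>S. t \<in> w}. F w) = (\<Sum>j<k. if t \<in> ss ! j then F (ss ! j) else 0)"
        using sum_nth_distinct_filter[OF ss(2), of "\<lambda>w. t \<in> w" F] ss by (simp add: k_def)
      also have "\<dots> = (\<Sum>j<k. if ds ! i \<in> ss ! j then v $ j else 0)" by (intro sum.cong) (auto simp: Fv i)
      finally have "real_of_int (den (ds ! i)) * (\<Sum>w\<in>{w\<in>S. t \<in> w}. F w) = (A *\<^sub>v v) $ Suc i"
        using AvS[OF v i(1)] by simp
      also have "\<dots> = 0" using Av i by simp
      finally show ?thesis using denpos[of "ds ! i"] by simp
    qed
    have "\<forall>w\<in>S. F w = 0" using ind e0 em unfolding indep_def S_def by blast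
    hence "\<And>j. j < k \<Longrightarrow> v $ j = 0" using Fv ss by (metis k_def nth_mem)
    thus "v = 0\<^sub>v k" using v by (intro eq_vecI) auto
  qed
  have ent: "A $$ (i,j) \<in> \<int> \<and> \<bar>A $$ (i,j)\<bar> \<le> real_of_int a" if "i < Suc n" "j < k" for i j
  proof (cases i)
    case 0 thus ?thesis using that a1 by (simp add: A_def)
  next
    case (Suc i')
    hence "i' < n" using that by simp
    hence "den (ds ! i') \<le> a" using dena dsD by blast
    thus ?thesis using that Suc denpos[of "ds ! i'"] a1 by (simp add: A_def)
  qed
  have bint: "(A *\<^sub>v x) $ i \<in> \<int>" if "i < Suc n" for i
  proof (cases i)
    case 0
    have "(A *\<^sub>v x) $ 0 = (\<Sum>j<k. M (ss ! j))" using Av0[OF x] by (simp add: x_def)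
    also have "\<dots> = 1" using sum_nth_distinct[OF ss(2), of M] ss Msum by (simp add: k_def)
    finally show ?thesis using 0 by simp
  next
    case (Suc i')
    hence i': "i' < n" using that by simp
    have "(\<Sum>j<k. if ds ! i' \<in> ss ! j then x $ j else 0) = (\<Sum>j<k. if ds ! i' \<in> ss ! j then M (ss ! j) else 0)"
      by (intro sum.cong) (auto simp: x_def)
    also have "\<dots> = (\<Sum>w\<in>{w\<in>S. ds ! i' \<in> w}. M w)"
      using sum_nth_distinct_filter[OF ss(2), of "\<lambda>w. ds ! i' \<in> w" M] ss by (simp add: k_def)
    also have "\<dots> = real_of_int (num (ds ! i')) / real_of_int (den (ds ! i'))"
      using Mmarg[OF dsD[OF i']] pval by simp
    finally have "(A *\<^sub>v x) $ i = real_of_int (num (ds ! i'))"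
      using AvS[OF x i'] Suc denpos[of "ds ! i'"] by simp
    thus ?thesis by simp
  qed
  obtain d where d: "d \<in> \<int>" "d \<noteq> 0" "\<bar>d\<bar> \<le> fact k * real_of_int a ^ k" "\<forall>j<k. d * x $ j \<in> \<int>"
    and kn: "k \<le> Suc n"
    using key[OF A x ker ent bint] by blast
  define q where "q = query_prob D M Q t"
  have q: "q = (\<Sum>j<k. if sat_query (ss ! j) Q t then x $ j else 0)"
  proof -
    have "q = (\<Sum>w\<in>{w\<in>S. sat_query w Q t}. M w)" using sumPow by (simp add: q_def query_prob_def)
    also have "\<dots> = (\<Sum>j<k. if sat_query (ss ! j) Q t then M (ss ! j) else 0)"
      using sum_nth_distinct_filter[OF ss(2), of "\<lambda>w. sat_query w Q t" M] ss by (simp add: k_def)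
    also have "\<dots> = (\<Sum>j<k. if sat_query (ss ! j) Q t then x $ j else 0)"
      by (intro sum.cong) (auto simp: x_def)
    finally show ?thesis .
  qed
  have dq: "\<bar>d\<bar> * q \<in> \<int>"
  proof -
    have "d * q \<in> \<int>" unfolding q sum_distrib_left
      by (intro Ints_sum) (use d(4) in auto)
    thus ?thesis by (cases "d \<ge> 0") (auto simp: abs_if minus_mult_left[symmetric])
  qed
  have q0: "0 \<le> q" unfolding q_def query_prob_def by (rule sum_nonneg) (auto simp: Mnn)
  have q1: "q \<le> 1"
  proof -
    have "q \<le> (\<Sum>w\<in>Pow D. M w)" unfolding q_def query_prob_def
      by (rule sum_mono2[OF finP]) (auto simp: Mnn)
    thus ?thesis using M by (simp add: is_model_def pdb_interp_def)
  qed
  obtain di where di: "d = real_of_int di" using d(1) Ints_cases by blast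
  obtain ei where ei: "\<bar>d\<bar> * q = real_of_int ei" using dq Ints_cases by blast
  define B where "B = (int m * a) ^ m"
  have dB: "real_of_int \<bar>di\<bar> \<le> real_of_int B"
  proof -
    have "\<bar>d\<bar> \<le> fact k * real_of_int a ^ k" by (rule d(3))
    also have "\<dots> \<le> real k ^ k * real_of_int a ^ k"
      by (rule mult_right_mono) (use a1 fact_le_power[of k, where 'a=real] in auto)
    also have "\<dots> \<le> real m ^ k * real_of_int a ^ k"
      by (intro mult_right_mono power_mono) (use a1 kn nD in \<open>auto simp: m_def\<close>)
    also have "\<dots> = (real m * real_of_int a) ^ k" by (simp add: power_mult_distrib)
    also have "\<dots> \<le> (real m * real_of_int a) ^ m"
    proof (rule power_increasing)
      show "k \<le> m" using kn nD by (simp add: m_def)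
      have "(1::real) \<le> real m" by (simp add: m_def)
      moreover have "(1::real) \<le> real_of_int a" using a1 by simp
      ultimately show "1 \<le> real m * real_of_int a" using mult_mono[of 1 "real m" 1 "real_of_int a"] by simp
    qed
    finally show ?thesis using di by (simp add: B_def)
  qed
  hence dBi: "\<bar>di\<bar> \<le> (int (card D + 3) * max_num_den D p) ^ (card D + 3)"
    unfolding of_int_le_iff B_def m_def a_def .
  show ?thesis
  proof (intro exI conjI)
    show "0 \<le> ei" using ei q0 by (metis abs_ge_zero mult_nonneg_nonneg of_int_0_le_iff)
    have "real_of_int ei \<le> real_of_int \<bar>di\<bar>" using ei q1 di
      by (metis abs_ge_zero mult_left_le mult.commute of_int_abs)
    hence "ei \<le> \<bar>di\<bar>" unfolding of_int_le_iff .
    thus "ei \<le> (int (card D + 3) * max_num_den D p) ^ (card D + 3)"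
      using dBi by linarith
    show "0 < \<bar>di\<bar>" using d(2) di by simp
    show "\<bar>di\<bar> \<le> (int (card D + 3) * max_num_den D p) ^ (card D + 3)"
      using dBi .
    show "query_prob D M Q t = real_of_int ei / real_of_int \<bar>di\<bar>"
      using ei di d(2) by (simp add: q_def[symmetric] field_simps)
  qed
qed

lemma uniq:
  assumes fin: "finite D" and M1: "is_model D p IC M1" and M2: "is_model D p IC M2"
    and S1: "supp D M1 = S" and S2: "supp D M2 = S" and ind: "indep D S"
  shows "query_prob D M1 Q t = query_prob D M2 Q t"
proof -
  have SP: "S \<subseteq> Pow D" using S1 by (auto simp: supp_def)
  have finP: "finite (Pow D)" using fin by simp
  have out1: "\<And>w. w \<in> Pow D \<Longrightarrow> w \<notin> S \<Longrightarrow> M1 w = 0" using S1 by (auto simp: supp_def)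
  have out2: "\<And>w. w \<in> Pow D \<Longrightarrow> w \<notin> S \<Longrightarrow> M2 w = 0" using S2 by (auto simp: supp_def)
  have sp1: "(\<Sum>w\<in>{w\<in>Pow D. P w}. M1 w) = (\<Sum>w\<in>{w\<in>S. P w}. M1 w)" for P
    by (rule sum_supp[OF finP SP]) (simp add: out1)
  have sp2: "(\<Sum>w\<in>{w\<in>Pow D. P w}. M2 w) = (\<Sum>w\<in>{w\<in>S. P w}. M2 w)" for P
    by (rule sum_supp[OF finP SP]) (simp add: out2)
  define f where "f = (\<lambda>w. M1 w - M2 w)"
  have "(\<Sum>w\<in>S. f w) = 0"
  proof -
    have "(\<Sum>w\<in>S. M1 w) = 1" using sp1[of "\<lambda>_. True"] M1 by (simp add: Pow_def is_model_def pdb_interp_def)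
    moreover have "(\<Sum>w\<in>S. M2 w) = 1" using sp2[of "\<lambda>_. True"] M2 by (simp add: Pow_def is_model_def pdb_interp_def)
    ultimately show ?thesis by (simp add: f_def sum_subtractf)
  qed
  moreover have "\<forall>t\<in>D. (\<Sum>w\<in>{w\<in>S. t \<in> w}. f w) = 0"
  proof
    fix t assume t: "t \<in> D"
    have "(\<Sum>w\<in>{w\<in>S. t \<in> w}. M1 w) = real_of_rat (p t)" using sp1[of "\<lambda>w. t \<in> w"] M1 t
      by (simp add: is_model_def pdb_interp_def)
    moreover have "(\<Sum>w\<in>{w\<in>S. t \<in> w}. M2 w) = real_of_rat (p t)" using sp2[of "\<lambda>w. t \<in> w"] M2 t
      by (simp add: is_model_def pdb_interp_def)
    ultimately show "(\<Sum>w\<in>{w\<in>S. t \<in> w}. f w) = 0" by (simp add: f_def sum_subtractf)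
  qed
  ultimately have "\<forall>w\<in>S. f w = 0" using ind unfolding indep_def by blast
  hence eq: "\<And>w. w \<in> S \<Longrightarrow> M1 w = M2 w" by (simp add: f_def)
  have "query_prob D M1 Q t = (\<Sum>w\<in>{w\<in>S. sat_query w Q t}. M1 w)" using sp1 by (simp add: query_prob_def)
  also have "\<dots> = (\<Sum>w\<in>{w\<in>S. sat_query w Q t}. M2 w)" by (intro sum.cong) (auto simp: eq)
  also have "\<dots> = query_prob D M2 Q t" using sp2 by (simp add: query_prob_def)
  finally show ?thesis .
qed

theorem lemma2:
  fixes D :: "('r, 'c::linorder) fact set"
    and p :: "('r, 'c) fact \<Rightarrow> rat"
    and IC :: "('r, 'v, 'c) denial set"
    and Q :: "('r, 'v, 'c) cq"
    and t :: "'c list"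
  assumes "pdb D p"
    and "consistent D p IC"
    and "is_answer D Q t"
  defines "m \<equiv> card D + 3"
    and "a \<equiv> max_num_den D p"
  shows "(\<exists>\<eta> \<delta> :: int. 0 \<le> \<eta> \<and> \<eta> \<le> (int m * a) ^ m \<and> 0 < \<delta> \<and> \<delta> \<le> (int m * a) ^ m \<and>
            real_of_int \<eta> / real_of_int \<delta> \<in> model_probs D p IC Q t \<and>
            (\<forall>x\<in>model_probs D p IC Q t. real_of_int \<eta> / real_of_int \<delta> \<le> x)) \<and>
         (\<exists>\<eta> \<delta> :: int. 0 \<le> \<eta> \<and> \<eta> \<le> (int m * a) ^ m \<and> 0 < \<delta> \<and> \<delta> \<le> (int m * a) ^ m \<and>
            real_of_int \<eta> / real_of_int \<delta> \<in> model_probs D p IC Q t \<and>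
            (\<forall>x\<in>model_probs D p IC Q t. x \<le> real_of_int \<eta> / real_of_int \<delta>))"
proof -
  have fin: "finite D" using assms(1) by (simp add: pdb_def)
  define V where "V = {query_prob D M Q t | M. is_model D p IC M \<and> indep D (supp D M)}"
  define h where "h = (\<lambda>S. query_prob D (SOME M. is_model D p IC M \<and> supp D M = S \<and> indep D S) Q t)"
  have "V \<subseteq> h ` Pow (Pow D)"
  proof
    fix v assume "v \<in> V"
    then obtain M where M: "v = query_prob D M Q t" "is_model D p IC M" "indep D (supp D M)"
      by (auto simp: V_def)
    let ?S = "supp D M"
    have ex: "\<exists>M'. is_model D p IC M' \<and> supp D M' = ?S \<and> indep D ?S" using M by blast
    let ?M = "SOME M'. is_model D p IC M' \<and> supp D M' = ?S \<and> indep D ?S"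
    have "is_model D p IC ?M \<and> supp D ?M = ?S \<and> indep D ?S" by (rule someI_ex[OF ex])
    hence "h ?S = v" unfolding h_def M(1) using uniq[OF fin _ M(2) _ refl M(3)] by blast
    moreover have "?S \<in> Pow (Pow D)" by (auto simp: supp_def)
    ultimately show "v \<in> h ` Pow (Pow D)" by blast
  qed
  hence finV: "finite V" using fin by (simp add: finite_subset)
  obtain M0 where M0: "is_model D p IC M0" using assms(2) by (auto simp: consistent_def)
  have Vne: "V \<noteq> {}" using reduce[OF fin M0, of 1 Q t] by (auto simp: V_def)
  have VP: "V \<subseteq> model_probs D p IC Q t" by (auto simp: V_def model_probs_def)
  have bnd: "\<exists>\<eta> \<delta> :: int. 0 \<le> \<eta> \<and> \<eta> \<le> (int m * a) ^ m \<and> 0 < \<delta> \<and> \<delta> \<le> (int m * a) ^ m \<and>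
            v = real_of_int \<eta> / real_of_int \<delta>" if "v \<in> V" for v
    using that bound[OF assms(1), of IC _ Q t] unfolding m_def a_def V_def by blast
  show ?thesis
  proof (intro conjI)
    have mV: "Min V \<in> V" using finV Vne by (rule Min_in)
    have le: "\<forall>x\<in>model_probs D p IC Q t. Min V \<le> x"
    proof
      fix x assume "x \<in> model_probs D p IC Q t"
      then obtain M where M: "x = query_prob D M Q t" "is_model D p IC M" by (auto simp: model_probs_def)
      obtain M' where "is_model D p IC M'" "indep D (supp D M')"
        "1 * query_prob D M' Q t \<le> 1 * query_prob D M Q t"
        using reduce[OF fin M(2), of 1 Q t] by auto
      hence "query_prob D M' Q t \<in> V" "query_prob D M' Q t \<le> x" using M by (auto simp: V_def)
      thus "Min V \<le> x" using Min_le[OF finV] by fastforce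
    qed
    obtain \<eta> \<delta> where "0 \<le> \<eta> \<and> \<eta> \<le> (int m * a) ^ m \<and> 0 < \<delta> \<and> \<delta> \<le> (int m * a) ^ m \<and>
            Min V = real_of_int \<eta> / real_of_int \<delta>" using bnd[OF mV] by blast
    thus "\<exists>\<eta> \<delta> :: int. 0 \<le> \<eta> \<and> \<eta> \<le> (int m * a) ^ m \<and> 0 < \<delta> \<and> \<delta> \<le> (int m * a) ^ m \<and>
            real_of_int \<eta> / real_of_int \<delta> \<in> model_probs D p IC Q t \<and>
            (\<forall>x\<in>model_probs D p IC Q t. real_of_int \<eta> / real_of_int \<delta> \<le> x)"
      using mV VP le by auto
  next
    have mV: "Max V \<in> V" using finV Vne by (rule Max_in)
    have le: "\<forall>x\<in>model_probs D p IC Q t. x \<le> Max V"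
    proof
      fix x assume "x \<in> model_probs D p IC Q t"
      then obtain M where M: "x = query_prob D M Q t" "is_model D p IC M" by (auto simp: model_probs_def)
      obtain M' where "is_model D p IC M'" "indep D (supp D M')"
        "-1 * query_prob D M' Q t \<le> -1 * query_prob D M Q t"
        using reduce[OF fin M(2), of "-1" Q t] by auto
      hence "query_prob D M' Q t \<in> V" "x \<le> query_prob D M' Q t" using M by (auto simp: V_def)
      thus "x \<le> Max V" using Max_ge[OF finV] by fastforce
    qed
    obtain \<eta> \<delta> where "0 \<le> \<eta> \<and> \<eta> \<le> (int m * a) ^ m \<and> 0 < \<delta> \<and> \<delta> \<le> (int m * a) ^ m \<and>
            Max V = real_of_int \<eta> / real_of_int \<delta>" using bnd[OF mV] by blast
    thus "\<exists>\<eta> \<delta> :: int. 0 \<le> \<eta> \<and> \<eta> \<le> (int m * a) ^ m \<and> 0 < \<delta> \<and> \<delta> \<le> (int m * a) ^ m \<and>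
            real_of_int \<eta> / real_of_int \<delta> \<in> model_probs D p IC Q t \<and>
            (\<forall>x\<in>model_probs D p IC Q t. x \<le> real_of_int \<eta> / real_of_int \<delta>)"
      using mV VP le by auto
  qed
qed


end
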